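(* For integers $1\le r\le n$, \[ B_q(n,r)=\frac{[2n-1]!_q\,[2r]_q}{[n+r]!_q\,[n-r]!_q} = \sum_{\pi \in \mathcal{B}(n,r)} q^{\operatorname{maj}(\pi) - \operatorname{des}(\pi)}, \] and also $B_q(n,r)=q^{-(n-r)}\left(\left[{2n-1\atop n+r-1}\right]_q-\left[{2n-1\atop n+r}\right]_q\right)$.
   Context: Let $[r]_q=1+q+\cdots+q^{r-1}$, $[n]!_q=\prod_{r=1}^n[r]_q$, and $\left[{a\atop b}\right]_q$ be the Gaussian binomial coefficient. Paths use up steps $(1,1)$ and down steps $(1,-1)$ and are written as 0-1 sequences $\pi=\pi_1\cdots\pi_\ell$, with $0$ for up and $1$ for down. The descent set is $D(\pi)=\{i:\pi_i>\pi_{i+1}\}$, $\operatorname{maj}(\pi)=\sum_{i\in D(\pi)}i$, and $\operatorname{des}(\pi)=|D(\pi)|$. $\mathcal{B}(n,r)$ is the set of paths of length $2n$ that start at the origin with an up step, end at $(2n,-2r+2)$, and never go below the line $y=-2r+2$. In particular $\mathcal{B}(n,1)$ is the set of Catalan (Dyck) paths of length $2n$. *)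

theory Defs
  imports Main
begin

definition qint :: "nat \<Rightarrow> 'a::field \<Rightarrow> 'a" where
  "qint r q = (\<Sum>i<r. q ^ i)"

definition qfact :: "nat \<Rightarrow> 'a::field \<Rightarrow> 'a" where
  "qfact n q = (\<Prod>r=1..n. qint r q)"

fun gbin :: "nat \<Rightarrow> nat \<Rightarrow> 'a::field \<Rightarrow> 'a" where
  "gbin a 0 q = 1"
| "gbin 0 (Suc b) q = 0"
| "gbin (Suc a) (Suc b) q = gbin a b q + q ^ Suc b * gbin a (Suc b) q"

definition Bq :: "nat \<Rightarrow> nat \<Rightarrow> 'a::field \<Rightarrow> 'a" where
  "Bq n r q = qfact (2*n - 1) q * qint (2*r) q / (qfact (n+r) q * qfact (n-r) q)"

(* Paths as lists of steps: False = up step (0), True = down step (1). *)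
definition height :: "bool list \<Rightarrow> int" where
  "height p = int (length (filter Not p)) - int (length (filter id p))"

definition Bpaths :: "nat \<Rightarrow> nat \<Rightarrow> bool list set" where
  "Bpaths n r = {p. length p = 2*n \<and> p \<noteq> [] \<and> hd p = False
      \<and> height p = 2 - 2 * int r
      \<and> (\<forall>k\<le>length p. height (take k p) \<ge> 2 - 2 * int r)}"

(* descent set with 1-based positions: i with pi_i > pi_(i+1), i.e. pi_i = 1, pi_(i+1) = 0 *)
definition descents :: "bool list \<Rightarrow> nat set" where
  "descents p = {i. 1 \<le> i \<and> i < length p \<and> p ! (i - 1) \<and> \<not> p ! i}"

definition maj :: "bool list \<Rightarrow> nat" where
  "maj p = \<Sum>(descents p)"

definition des :: "bool list \<Rightarrow> nat" where
  "des p = card (descents p)"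

end

theory Submission imports Defs begin

definition G :: "nat \<Rightarrow> nat \<Rightarrow> 'a::field \<Rightarrow> 'a" where
  "G a b q = gbin (a+b) a q"

lemma gbin_gt: "m < k \<Longrightarrow> gbin m k q = 0"
proof (induction m arbitrary: k)
  case 0 then show ?case by (cases k) auto
next
  case (Suc m) then show ?case by (cases k) auto
qed

lemma gbin_self: "gbin m m q = 1"
  by (induction m) (auto simp: gbin_gt)

lemma G0l[simp]: "G 0 b q = 1" by (simp add: G_def)
lemma G0r[simp]: "G a 0 q = 1" by (simp add: G_def gbin_self)

lemma P1: "G (Suc a) (Suc b) q = G a (Suc b) q + q ^ Suc a * G (Suc a) b q"
  by (simp add: G_def)

lemma P2: "G (Suc a) (Suc b) q = q ^ Suc b * G a (Suc b) q + G (Suc a) b q"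
proof (induction "a+b" arbitrary: a b rule: less_induct)
  case less
  show ?case
  proof (cases a)
    case 0
    show ?thesis
    proof (cases b)
      case 0 then show ?thesis using \<open>a=0\<close> by (simp add: P1[of 0 0] algebra_simps)
    next
      case (Suc b')
      have ih: "G (Suc 0) (Suc b') q = q ^ Suc b' * G 0 (Suc b') q + G (Suc 0) b' q"
        using less[of 0 b'] Suc 0 by simp
      have "G (Suc a) (Suc b) q = 1 + q * G (Suc 0) (Suc b') q"
        using 0 Suc P1[of 0 "Suc b'" q] by simp
      also have "\<dots> = 1 + q * (q ^ Suc b' + G (Suc 0) b' q)" using ih by simp
      also have "\<dots> = q ^ Suc b * G a (Suc b) q + (1 + q * G (Suc 0) b' q)"
        using 0 Suc by (simp add: algebra_simps)
      also have "\<dots> = q ^ Suc b * G a (Suc b) q + G (Suc a) b q"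
        using 0 Suc P1[of 0 b' q] by simp
      finally show ?thesis .
    qed
  next
    case (Suc a')
    show ?thesis
    proof (cases b)
      case 0
      have ih: "G (Suc a') (Suc 0) q = q * G a' (Suc 0) q + 1"
        using less[of a' 0] Suc 0 by simp
      have p: "G (Suc a') (Suc 0) q = G a' (Suc 0) q + q ^ Suc a'" using P1[of a' 0 q] by simp
      have "G (Suc a) (Suc b) q = G (Suc a') (Suc 0) q + q ^ Suc a" using P1[of a 0 q] 0 Suc by simp
      also have "\<dots> = q * (G a' (Suc 0) q + q ^ Suc a') + 1" using ih Suc by (simp add: algebra_simps)
      also have "\<dots> = q ^ Suc b * G a (Suc b) q + G (Suc a) b q" using p 0 Suc by simp
      finally show ?thesis .
    next
      case (Suc b')
      have ih1: "G a (Suc b) q = q ^ Suc b * G a' (Suc b) q + G a b q"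
        using less[of a' b] \<open>a = Suc a'\<close> by simp
      have ih2: "G (Suc a) b q = q ^ b * G a b q + G (Suc a) b' q"
        using less[of a b'] Suc by simp
      have p1: "G a (Suc b) q = G a' (Suc b) q + q ^ a * G a b q"
        using P1[of a' b q] \<open>a = Suc a'\<close> by simp
      have p2: "G (Suc a) b q = G a b q + q ^ Suc a * G (Suc a) b' q"
        using P1[of a b' q] Suc by simp
      have "G (Suc a) (Suc b) q = G a (Suc b) q + q ^ Suc a * G (Suc a) b q" by (rule P1)
      also have "\<dots> = (q ^ Suc b * G a' (Suc b) q + G a b q) + q ^ Suc a * (q ^ b * G a b q + G (Suc a) b' q)"
        by (subst ih1, subst ih2, rule refl)
      also have "\<dots> = q ^ Suc b * (G a' (Suc b) q + q ^ a * G a b q) + (G a b q + q ^ Suc a * G (Suc a) b' q)"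
        by (simp add: algebra_simps)
      also have "\<dots> = q ^ Suc b * G a (Suc b) q + G (Suc a) b q" using p1 p2 by simp
      finally show ?thesis .
    qed
  qed
qed

lemma I: "G (Suc a) (Suc b) q - G (Suc a) b q - G a (Suc b) q = (q ^ (Suc a + b) - 1) * G a b q"
proof (cases a)
  case 0 then show ?thesis using P2[of 0 b q] by (simp add: algebra_simps)
next
  case (Suc a')
  have e1: "G a (Suc b) q = q ^ Suc b * G a' (Suc b) q + G a b q" using P2[of a' b q] Suc by simp
  have e2: "G a' (Suc b) q = G a (Suc b) q - q ^ a * G a b q" using P1[of a' b q] Suc by simp
  have e3: "G a (Suc b) q = q ^ Suc b * (G a (Suc b) q - q ^ a * G a b q) + G a b q"
    using e1 e2 by simp
  have "G (Suc a) (Suc b) q - G (Suc a) b q - G a (Suc b) q = (q ^ Suc b - 1) * G a (Suc b) q"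
    using P2[of a b q] by (simp add: algebra_simps)
  also have "\<dots> = (q ^ (Suc a + b) - 1) * G a b q"
    using e3 by (simp add: algebra_simps power_add)
  finally show ?thesis .
qed


definition c0 :: "bool list \<Rightarrow> nat" where "c0 w = length (filter Not w)"
definition c1 :: "bool list \<Rightarrow> nat" where "c1 w = length (filter id w)"

definition P :: "nat \<Rightarrow> nat \<Rightarrow> nat \<Rightarrow> bool list set" where
  "P d a b = {w. c0 w = a \<and> c1 w = b \<and> (\<forall>k\<le>length w. height (take k w) \<ge> - int d)}"

lemma len_c: "length w = c0 w + c1 w"
  by (induction w) (auto simp: c0_def c1_def)

lemma height_c: "height w = int (c0 w) - int (c1 w)"
  by (simp add: height_def c0_def c1_def)

lemma c0_snoc[simp]: "c0 (w @ [x]) = c0 w + (if x then 0 else 1)" by (simp add: c0_def)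
lemma c1_snoc[simp]: "c1 (w @ [x]) = c1 w + (if x then 1 else 0)" by (simp add: c1_def)

lemma pref_snoc: "(\<forall>k\<le>length (w@[x]). height (take k (w@[x])) \<ge> L) \<longleftrightarrow>
   (\<forall>k\<le>length w. height (take k w) \<ge> L) \<and> height (w@[x]) \<ge> L"
proof
  assume h: "\<forall>k\<le>length (w@[x]). height (take k (w@[x])) \<ge> L"
  have "\<forall>k\<le>length w. height (take k w) \<ge> L"
  proof (intro allI impI)
    fix k assume "k \<le> length w"
    then show "height (take k w) \<ge> L" using h[rule_format, of k] by simp
  qed
  moreover have "height (w@[x]) \<ge> L" using h[rule_format, of "length (w@[x])"] by simp
  ultimately show "(\<forall>k\<le>length w. height (take k w) \<ge> L) \<and> height (w@[x]) \<ge> L" by blast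
next
  assume h: "(\<forall>k\<le>length w. height (take k w) \<ge> L) \<and> height (w@[x]) \<ge> L"
  show "\<forall>k\<le>length (w@[x]). height (take k (w@[x])) \<ge> L"
  proof (intro allI impI)
    fix k assume k: "k \<le> length (w@[x])"
    show "height (take k (w@[x])) \<ge> L"
    proof (cases "k \<le> length w")
      case True then show ?thesis using h by simp
    next
      case False then have "k = length (w@[x])" using k by simp
      then show ?thesis using h by simp
    qed
  qed
qed

lemma mem_snoc: "w @ [x] \<in> P d a b \<longleftrightarrow>
  (if x then 1 \<le> b \<and> w \<in> P d a (b-1) \<and> int b \<le> int a + int d else 1 \<le> a \<and> w \<in> P d (a-1) b)"
proof (cases x)
  case True
  then show ?thesis unfolding P_def using pref_snoc[of w x "- int d"]
    by (auto simp: height_c)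
next
  case False
  have "w \<in> P d (a-1) b \<Longrightarrow> height w \<ge> - int d" unfolding P_def by (auto dest: spec[of _ "length w"])
  then show ?thesis unfolding P_def using pref_snoc[of w x "- int d"] False
    by (auto simp: height_c)
qed

lemma P_empty: "int a + int d < int b \<Longrightarrow> P d a b = {}"
  unfolding P_def by (auto dest!: spec[of _ "length _"] simp: height_c)

lemma P_fin: "finite (P d a b)"
proof -
  have "P d a b \<subseteq> {w. set w \<subseteq> (UNIV::bool set) \<and> length w = a + b}"
    unfolding P_def using len_c by auto
  moreover have "finite {w. set w \<subseteq> (UNIV::bool set) \<and> length w = a + b}"
    by (rule finite_lists_length_eq) simp
  ultimately show ?thesis by (rule finite_subset)
qed

lemma P00: "P d 0 0 = {[]}"
proof (intro set_eqI iffI)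
  fix w assume "w \<in> P d 0 0"
  then have "length w = 0" using len_c[of w] unfolding P_def by auto
  then show "w \<in> {[]}" by simp
next
  fix w :: "bool list" assume "w \<in> {[]}" then show "w \<in> P d 0 0"
    unfolding P_def by (auto simp: c0_def c1_def height_def)
qed

lemma P_nil: "[] \<in> P d a b \<longleftrightarrow> a = 0 \<and> b = 0"
  unfolding P_def by (auto simp: c0_def c1_def height_def)

lemma descents_fin: "descents w \<subseteq> {..<length w}"
  unfolding descents_def by auto

lemma descents_snoc: "descents (w @ [x]) = descents w \<union> (if \<not> x \<and> w \<noteq> [] \<and> last w then {length w} else {})"
proof -
  have "i \<in> descents (w @ [x]) \<longleftrightarrow> i \<in> descents w \<union> (if \<not> x \<and> w \<noteq> [] \<and> last w then {length w} else {})" for i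
  proof (cases "i < length w")
    case True
    then show ?thesis unfolding descents_def by (auto simp: nth_append)
  next
    case False
    show ?thesis
    proof (cases "i = length w")
      case True
      then show ?thesis unfolding descents_def
        by (cases "w = []") (auto simp: nth_append last_conv_nth Suc_le_eq)
    next
      case False
      then show ?thesis using \<open>\<not> i < length w\<close> unfolding descents_def by auto
    qed
  qed
  then show ?thesis by blast
qed

lemma maj_snoc: "maj (w @ [x]) = maj w + (if \<not> x \<and> w \<noteq> [] \<and> last w then length w else 0)"
proof -
  have fin: "finite (descents w)" using descents_fin finite_subset by blast
  have "length w \<notin> descents w" using descents_fin by auto
  then show ?thesis unfolding maj_def descents_snoc using fin by auto
qed

definition S :: "nat \<Rightarrow> nat \<Rightarrow> nat \<Rightarrow> 'a::field \<Rightarrow> 'a" where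
  "S d a b q = (\<Sum>w\<in>P d a b. q ^ maj w)"
definition S1 :: "nat \<Rightarrow> nat \<Rightarrow> nat \<Rightarrow> 'a::field \<Rightarrow> 'a" where
  "S1 d a b q = (\<Sum>w\<in>{w\<in>P d a b. w \<noteq> [] \<and> last w}. q ^ maj w)"
definition S0 :: "nat \<Rightarrow> nat \<Rightarrow> nat \<Rightarrow> 'a::field \<Rightarrow> 'a" where
  "S0 d a b q = (\<Sum>w\<in>{w\<in>P d a b. w \<noteq> [] \<and> \<not> last w}. q ^ maj w)"

lemma S_split: "S d a b q = S0 d a b q + S1 d a b q + (if a = 0 \<and> b = 0 then 1 else 0)"
proof -
  let ?A = "{w\<in>P d a b. w \<noteq> [] \<and> \<not> last w}"
  let ?B = "{w\<in>P d a b. w \<noteq> [] \<and> last w}"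
  let ?E = "{w\<in>P d a b. w = []}"
  have eq: "P d a b = (?A \<union> ?B) \<union> ?E" by auto
  have f: "finite ?A" "finite ?B" "finite ?E" using P_fin by auto
  have "S d a b q = (\<Sum>w\<in>?A. q ^ maj w) + (\<Sum>w\<in>?B. q ^ maj w) + (\<Sum>w\<in>?E. q ^ maj w)"
    unfolding S_def
    by (subst eq, subst sum.union_disjoint, use f in auto, subst sum.union_disjoint, auto)
  moreover have "?E = (if a = 0 \<and> b = 0 then {[]} else {})" using P_nil by auto
  moreover have "maj [] = 0" by (simp add: maj_def descents_def)
  ultimately show ?thesis unfolding S0_def S1_def by auto
qed

lemma inj_snoc: "inj_on (\<lambda>u. u @ [x]) A" by (auto simp: inj_on_def)

lemma S1_eq: "S1 d a b q = (if 1 \<le> b \<and> int b \<le> int a + int d then S d a (b-1) q else 0)"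
proof -
  have eq: "{w\<in>P d a b. w \<noteq> [] \<and> last w} =
     (\<lambda>u. u @ [True]) ` (if 1 \<le> b \<and> int b \<le> int a + int d then P d a (b-1) else {})"
  proof (intro set_eqI iffI)
    fix w assume w: "w \<in> {w\<in>P d a b. w \<noteq> [] \<and> last w}"
    then have "w = butlast w @ [True]" using append_butlast_last_id[of w] by auto
    then show "w \<in> (\<lambda>u. u @ [True]) ` (if 1 \<le> b \<and> int b \<le> int a + int d then P d a (b-1) else {})"
    proof -
      have "butlast w @ [True] \<in> P d a b" using w \<open>w = butlast w @ [True]\<close> by simp
      then have "butlast w \<in> (if 1 \<le> b \<and> int b \<le> int a + int d then P d a (b-1) else {})" using mem_snoc[of "butlast w" True d a b] by simp
      then show ?thesis using \<open>w = butlast w @ [True]\<close> by (intro image_eqI[of w _ "butlast w"])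
    qed
  next
    fix w assume "w \<in> (\<lambda>u. u @ [True]) ` (if 1 \<le> b \<and> int b \<le> int a + int d then P d a (b-1) else {})"
    then show "w \<in> {w\<in>P d a b. w \<noteq> [] \<and> last w}"
      using mem_snoc[of _ True d a b] by (auto split: if_splits)
  qed
  show ?thesis unfolding S1_def S_def eq
    by (subst sum.reindex, rule inj_snoc) (simp add: maj_snoc)
qed

lemma S0_eq: "S0 d a b q = (if 1 \<le> a then S d (a-1) b q + (q ^ (a - 1 + b) - 1) * S1 d (a-1) b q else 0)"
proof -
  have eq: "{w\<in>P d a b. w \<noteq> [] \<and> \<not> last w} =
     (\<lambda>u. u @ [False]) ` (if 1 \<le> a then P d (a-1) b else {})"
  proof (intro set_eqI iffI)
    fix w assume w: "w \<in> {w\<in>P d a b. w \<noteq> [] \<and> \<not> last w}"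
    then have "w = butlast w @ [False]" using append_butlast_last_id[of w] by auto
    then show "w \<in> (\<lambda>u. u @ [False]) ` (if 1 \<le> a then P d (a-1) b else {})"
    proof -
      have "butlast w @ [False] \<in> P d a b" using w \<open>w = butlast w @ [False]\<close> by simp
      then have "butlast w \<in> (if 1 \<le> a then P d (a-1) b else {})" using mem_snoc[of "butlast w" False d a b] by simp
      then show ?thesis using \<open>w = butlast w @ [False]\<close> by (intro image_eqI[of w _ "butlast w"])
    qed
  next
    fix w assume "w \<in> (\<lambda>u. u @ [False]) ` (if 1 \<le> a then P d (a-1) b else {})"
    then show "w \<in> {w\<in>P d a b. w \<noteq> [] \<and> \<not> last w}"
      using mem_snoc[of _ False d a b] by (auto split: if_splits)
  qed
  show ?thesis
  proof (cases "1 \<le> a")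
    case False
    then show ?thesis unfolding S0_def eq by simp
  next
    case True
    have len: "u \<in> P d (a-1) b \<Longrightarrow> length u = a - 1 + b" for u
      unfolding P_def using len_c by auto
    have "S0 d a b q = (\<Sum>u\<in>P d (a-1) b. q ^ maj (u @ [False]))"
      unfolding S0_def eq using True by (simp add: sum.reindex[OF inj_snoc])
    also have "\<dots> = (\<Sum>u\<in>P d (a-1) b. q ^ maj u + (if u \<noteq> [] \<and> last u then (q ^ (a - 1 + b) - 1) * q ^ maj u else 0))"
      by (rule sum.cong) (auto simp: maj_snoc len power_add algebra_simps)
    also have "\<dots> = S d (a-1) b q + (q ^ (a - 1 + b) - 1) * S1 d (a-1) b q"
    proof -
      have "(\<Sum>u\<in>P d (a-1) b. (if u \<noteq> [] \<and> last u then (q ^ (a - 1 + b) - 1) * q ^ maj u else 0))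
          = (q ^ (a - 1 + b) - 1) * (\<Sum>u\<in>P d (a-1) b. (if u \<noteq> [] \<and> last u then q ^ maj u else 0))"
        unfolding sum_distrib_left by (rule sum.cong) auto
      then show ?thesis unfolding S_def S1_def sum.distrib sum.inter_filter[OF P_fin] by simp
    qed
    finally show ?thesis using True by simp
  qed
qed


definition H :: "nat \<Rightarrow> nat \<Rightarrow> nat \<Rightarrow> 'a::field \<Rightarrow> 'a" where
  "H d a b q = (if d + 1 \<le> b then G (b - d - 1) (a + d + 1) q else 0)"

lemma HI: "H d (Suc a) (Suc b) q = H d (Suc a) b q + H d a (Suc b) q + (q ^ (Suc a + b) - 1) * H d a b q"
proof -
  consider "b < d" | "b = d" | "d < b" by linarith
  then show ?thesis
  proof cases
    case 1 then show ?thesis by (simp add: H_def)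
  next
    case 2 then show ?thesis by (simp add: H_def)
  next
    case 3
    then obtain x where x: "b = d + 1 + x" by (metis add_Suc_right less_iff_Suc_add plus_1_eq_Suc add.commute)
    have "H d (Suc a) (Suc b) q = G (Suc x) (Suc (a+d+1)) q" using x by (simp add: H_def)
    moreover have "H d (Suc a) b q = G x (Suc (a+d+1)) q" using x by (simp add: H_def)
    moreover have "H d a (Suc b) q = G (Suc x) (a+d+1) q" using x by (simp add: H_def Suc_diff_le)
    moreover have "H d a b q = G x (a+d+1) q" using x by (simp add: H_def)
    moreover have "Suc x + (a + d + 1) = Suc a + b" using x by simp
    ultimately show ?thesis using I[of x "a+d+1" q] by (simp add: algebra_simps)
  qed
qed

lemma HB: assumes "b = a + d"
  shows "G (Suc a) (Suc b) q - q ^ (d+1) * H d (Suc a) (Suc b) q = G (Suc a) b q - q ^ (d+1) * H d (Suc a) b q"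
proof -
  have g: "G (Suc a) (Suc b) q - G (Suc a) b q = q ^ Suc b * G a (Suc b) q" using P2[of a b q] by simp
  have h1: "H d (Suc a) (Suc b) q = G a (Suc (Suc b)) q" using assms by (simp add: H_def)
  have h: "H d (Suc a) (Suc b) q - H d (Suc a) b q = q ^ a * G a (Suc b) q"
  proof (cases a)
    case 0 then show ?thesis using assms h1 by (simp add: H_def)
  next
    case (Suc a'')
    have "H d (Suc a) b q = G a'' (Suc (Suc b)) q" using assms Suc by (simp add: H_def)
    then show ?thesis using h1 P1[of a'' "Suc b" q] Suc by simp
  qed
  have "q ^ (d+1) * q ^ a = q ^ (d + 1 + a)" by (simp add: power_add)
  moreover have "d + 1 + a = Suc b" using assms by simp
  ultimately have "q ^ (d+1) * q ^ a = q ^ Suc b" by simp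
  then show ?thesis using g h by (simp add: algebra_simps)
    (metis (no_types, lifting) mult.assoc)
qed

lemma S_empty: "int a + int d < int b \<Longrightarrow> S d a b q = 0"
  unfolding S_def using P_empty by simp

lemma lin: fixes s :: "'a::field"
  shows "s = s1 + (m - 1) * s3 + s2 \<Longrightarrow> s1 = g1 - Q*h1 \<Longrightarrow> s2 = g2 - Q*h2 \<Longrightarrow> s3 = g3 - Q*h3
   \<Longrightarrow> g = g1 + g2 + (m-1)*g3 \<Longrightarrow> h = h1 + h2 + (m-1)*h3 \<Longrightarrow> s = g - Q*h"
proof -
  assume a: "s = s1 + (m - 1) * s3 + s2" "s1 = g1 - Q*h1" "s2 = g2 - Q*h2" "s3 = g3 - Q*h3"
    "g = g1 + g2 + (m-1)*g3" "h = h1 + h2 + (m-1)*h3"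
  have "s = (g1 - Q*h1) + (m - 1) * (g3 - Q*h3) + (g2 - Q*h2)" using a(1-4) by simp
  also have "\<dots> = (g1 + g2 + (m-1)*g3) - Q*(h1 + h2 + (m-1)*h3)" by (simp add: algebra_simps)
  finally show ?thesis using a(5,6) by simp
qed

lemma core: "b \<le> a + d \<Longrightarrow> S d a b q = G a b q - q ^ (d+1) * H d a b q"
proof (induction "a+b" arbitrary: a b rule: less_induct)
  case less
  show ?case
  proof (cases a)
    case 0
    show ?thesis
    proof (cases b)
      case 0 then show ?thesis using \<open>a = 0\<close>
        by (simp add: S_split S0_eq S1_eq H_def)
    next
      case (Suc b')
      have ih: "S d 0 b' q = G 0 b' q - q ^ (d+1) * H d 0 b' q" using less(1)[of 0 b'] less(2) 0 Suc by simp
      show ?thesis using 0 Suc ih less(2) by (simp add: S_split S0_eq S1_eq H_def)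
    qed
  next
    case (Suc a')
    show ?thesis
    proof (cases b)
      case 0
      have ih: "S d a' 0 q = G a' 0 q - q ^ (d+1) * H d a' 0 q" using less(1)[of a' 0] 0 Suc by simp
      show ?thesis using 0 Suc ih by (simp add: S_split S0_eq S1_eq H_def)
    next
      case (Suc b')
      have s: "S d a b q = S d a' b q + (q ^ (a' + b) - 1) * S1 d a' b q + S d a b' q"
        using Suc \<open>a = Suc a'\<close> less(2) by (simp add: S_split S0_eq S1_eq)
      show ?thesis
      proof (cases "b \<le> a' + d")
        case True
        have i1: "S d a' b q = G a' b q - q ^ (d+1) * H d a' b q" using less(1)[of a' b] True \<open>a = Suc a'\<close> by simp
        have i2: "S d a b' q = G a b' q - q ^ (d+1) * H d a b' q" using less(1)[of a b'] less(2) Suc by simp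
        have i3: "S d a' b' q = G a' b' q - q ^ (d+1) * H d a' b' q" using less(1)[of a' b'] True Suc \<open>a = Suc a'\<close> by simp
        have s1: "S1 d a' b q = S d a' b' q" using True Suc by (simp add: S1_eq)
        have e: "a' + b = Suc a' + b'" using Suc by simp
        have gI: "G a b q = G a' b q + G a b' q + (q ^ (a' + b) - 1) * G a' b' q"
          using I[of a' b' q] Suc \<open>a = Suc a'\<close> e by (simp add: algebra_simps)
        have hI: "H d a b q = H d a' b q + H d a b' q + (q ^ (a' + b) - 1) * H d a' b' q"
          using HI[of d a' b' q] Suc \<open>a = Suc a'\<close> e by (simp add: algebra_simps)
        show ?thesis using lin[OF s[unfolded s1] i1 i2 i3 gI hI] .
      next
        case False
        then have b: "b' = a' + d" using less(2) Suc \<open>a = Suc a'\<close> by simp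
        have z: "S d a' b q = 0" "S1 d a' b q = 0" using False by (auto simp: S_empty S1_eq)
        have i2: "S d a b' q = G a b' q - q ^ (d+1) * H d a b' q" using less(1)[of a b'] less(2) Suc by simp
        show ?thesis using s z i2 HB[OF b, of q] Suc \<open>a = Suc a'\<close> by simp
      qed
    qed
  qed
qed


lemma height_cons: "height (x # w) = height w + (if x then -1 else 1)"
  by (simp add: height_def)

lemma descents_cons: "descents (False # w) = Suc ` descents w"
proof (intro set_eqI iffI)
  fix i assume "i \<in> descents (False # w)"
  then show "i \<in> Suc ` descents w" unfolding descents_def
    by (cases i; cases "i - 1") (auto simp: image_iff)
next
  fix i assume "i \<in> Suc ` descents w"
  then show "i \<in> descents (False # w)" unfolding descents_def by auto
qed

lemma stat_cons: "maj (False # w) - des (False # w) = maj w"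
proof -
  have fin: "finite (descents w)" using descents_fin finite_subset by blast
  have sc: "(\<Sum>i\<in>D. Suc i) = (\<Sum>i\<in>D. i) + card D" if "finite D" for D :: "nat set"
    using that by (induction rule: finite_induct) auto
  have "maj (False # w) = maj w + card (descents w)"
    unfolding maj_def descents_cons using sc[OF fin] by (simp add: sum.reindex)
  moreover have "des (False # w) = card (descents w)"
    unfolding des_def descents_cons by (simp add: card_image)
  ultimately show ?thesis by simp
qed

lemma take_cons_Suc: "take (Suc k) (x # w) = x # take k w" by simp

lemma Bpaths_eq: assumes "1 \<le> r" "r \<le> n"
  shows "Bpaths n r = (\<lambda>w. False # w) ` P (2*r-1) (n-r) (n+r-1)"
proof (intro set_eqI iffI)
  fix p assume p: "p \<in> Bpaths n r"
  then obtain w where w: "p = False # w" unfolding Bpaths_def by (cases p) auto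
  have len: "length w = 2*n - 1" using p w unfolding Bpaths_def by auto
  have h: "height w = 1 - 2 * int r" using p w unfolding Bpaths_def by (auto simp: height_cons)
  have c: "int (c0 w) + int (c1 w) = 2 * int n - 1" using len len_c[of w] assms by linarith
  have h2: "int (c0 w) - int (c1 w) = 1 - 2 * int r" using h height_c[of w] by simp
  have c0: "c0 w = n - r" using c h2 assms by linarith
  have c1: "c1 w = n + r - 1" using c h2 assms by linarith
  have pre: "\<forall>k\<le>length w. height (take k w) \<ge> - int (2*r-1)"
  proof (intro allI impI)
    fix k assume "k \<le> length w"
    then have "height (take (Suc k) p) \<ge> 2 - 2 * int r" using p w unfolding Bpaths_def by auto
    then show "height (take k w) \<ge> - int (2*r-1)" using w assms by (simp add: height_cons of_nat_diff)
  qed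
  show "p \<in> (\<lambda>w. False # w) ` P (2*r-1) (n-r) (n+r-1)"
    using w c0 c1 pre unfolding P_def by blast
next
  fix p assume "p \<in> (\<lambda>w. False # w) ` P (2*r-1) (n-r) (n+r-1)"
  then obtain w where w: "p = False # w" and wP: "w \<in> P (2*r-1) (n-r) (n+r-1)" by auto
  have c0: "c0 w = n - r" and c1: "c1 w = n + r - 1" using wP unfolding P_def by auto
  have pre: "\<forall>k\<le>length w. height (take k w) \<ge> - int (2*r-1)" using wP unfolding P_def by auto
  have len: "length p = 2 * n" using w len_c[of w] c0 c1 assms by simp
  have hw: "height w = int (n - r) - int (n + r - 1)" using c0 c1 height_c[of w] by simp
  have h: "height p = 2 - 2 * int r" using w hw assms by (simp add: height_cons of_nat_diff)
  have pre2: "\<forall>k\<le>length p. height (take k p) \<ge> 2 - 2 * int r"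
  proof (intro allI impI)
    fix k assume k: "k \<le> length p"
    show "height (take k p) \<ge> 2 - 2 * int r"
    proof (cases k)
      case 0 then show ?thesis using assms by (simp add: height_def)
    next
      case (Suc k')
      then have "k' \<le> length w" using k w by simp
      then have "height (take k' w) \<ge> - int (2*r-1)" using pre by simp
      then show ?thesis using Suc w assms by (simp add: height_cons of_nat_diff)
    qed
  qed
  show "p \<in> Bpaths n r" unfolding Bpaths_def using len h pre2 w by simp
qed

lemma qfact_Suc: "qfact (Suc m) q = qfact m q * qint (Suc m) q"
  by (simp add: qfact_def)

lemma qfact0[simp]: "qfact 0 q = 1" by (simp add: qfact_def)

lemma qint_add: "qint (a + b) q = qint a q + q ^ a * qint b q"
  by (induction b) (auto simp: qint_def power_add algebra_simps)

lemma QF: "G a b q * qfact a q * qfact b q = qfact (a + b) q"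
proof (induction "a+b" arbitrary: a b rule: less_induct)
  case less
  show ?case
  proof (cases a)
    case 0 then show ?thesis by simp
  next
    case (Suc a')
    show ?thesis
    proof (cases b)
      case 0 then show ?thesis by simp
    next
      case (Suc b')
      have i1: "G a' b q * qfact a' q * qfact b q = qfact (a' + b) q" using less[of a' b] \<open>a = Suc a'\<close> by simp
      have i2: "G a b' q * qfact a q * qfact b' q = qfact (a + b') q" using less[of a b'] Suc by simp
      have m1: "a' + b = a + b'" using Suc \<open>a = Suc a'\<close> by simp
      have qi: "qint (a + b) q = qint a q + q ^ a * qint b q" by (rule qint_add)
      have "G a b q * qfact a q * qfact b q
          = (G a' b q + q ^ a * G a b' q) * qfact a q * qfact b q"
        using P1[of a' b' q] Suc \<open>a = Suc a'\<close> by simp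
      also have "\<dots> = (G a' b q * qfact a' q * qfact b q) * qint a q
                      + q ^ a * (G a b' q * qfact a q * qfact b' q) * qint b q"
        using Suc \<open>a = Suc a'\<close> by (simp add: qfact_Suc algebra_simps)
      also have "\<dots> = qfact (a + b') q * (qint a q + q ^ a * qint b q)"
        using i1 i2 m1 by (simp add: algebra_simps)
      also have "\<dots> = qfact (a + b) q" using qi Suc by (simp add: qfact_Suc)
      finally show ?thesis .
    qed
  qed
qed

lemma qfact_nz: "qfact (m + k) q \<noteq> 0 \<Longrightarrow> qfact m q \<noteq> 0"
  by (induction k) (auto simp: qfact_Suc)

lemma qfact_nz': "qfact N q \<noteq> 0 \<Longrightarrow> m \<le> N \<Longrightarrow> qfact m q \<noteq> 0"
  using qfact_nz[of m "N - m" q] by simp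

lemma qint_nz: "qfact N q \<noteq> 0 \<Longrightarrow> Suc m \<le> N \<Longrightarrow> qint (Suc m) q \<noteq> 0"
  using qfact_nz'[of N q "Suc m"] by (auto simp: qfact_Suc)

lemma fin_alg:
  fixes q :: "'a::field"
  assumes nz: "A \<noteq> 0" "B \<noteq> 0" "x \<noteq> 0" "y \<noteq> 0" "q \<noteq> 0"
    and y1: "y = z + q ^ k * x" and y2: "y = x + q ^ M * z"
    and g1: "G1 * (A*x) * B = F" and g2: "G2 * A * (B*y) = F"
    and g3: "G3 * B * (A*x) = F" and g4: "G4 * (B*y) * A = F"
  shows "F * z / ((B*y) * (A*x)) = G1 - q^k * G2 \<and>
         F * z / ((B*y) * (A*x)) = inverse q ^ M * (G3 - G4)"
proof -
  have e1: "G1 = F / (A*x*B)" using g1 nz by (simp add: field_simps)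
  have e2: "G2 = F / (A*(B*y))" using g2 nz by (simp add: field_simps)
  have e3: "G3 = F / (B*(A*x))" using g3 nz by (simp add: field_simps)
  have e4: "G4 = F / ((B*y)*A)" using g4 nz by (simp add: field_simps)
  have "G1 - q^k * G2 = F * (y - q^k * x) / ((B*y) * (A*x))"
    unfolding e1 e2 using nz by (simp add: field_simps)
  also have "y - q^k * x = z" using y1 by simp
  finally have r1: "G1 - q^k * G2 = F * z / ((B*y) * (A*x))" .
  have "G3 - G4 = F * (y - x) / ((B*y) * (A*x))"
    unfolding e3 e4 using nz by (simp add: field_simps)
  also have "y - x = q ^ M * z" using y2 by simp
  finally have "G3 - G4 = q ^ M * (F * z / ((B*y) * (A*x)))" by simp
  then have r2: "inverse q ^ M * (G3 - G4) = F * z / ((B*y) * (A*x))"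
    using nz by (simp add: power_inverse)
  show ?thesis using r1 r2 by simp
qed


theorem theorem1:
  fixes q :: "'a::field" and n r :: nat
  assumes "1 \<le> r" and "r \<le> n"
    and "q \<noteq> 0" and "qfact (n + r) q \<noteq> 0" and "qfact (n - r) q \<noteq> 0"
  shows "Bq n r q = (\<Sum>p\<in>Bpaths n r. q ^ (maj p - des p))
       \<and> Bq n r q = inverse q ^ (n - r) * (gbin (2*n - 1) (n + r - 1) q - gbin (2*n - 1) (n + r) q)"
proof -
  define d where "d = 2*r - 1"
  define a where "a = n - r"
  define b where "b = n + r - 1"
  have d1: "d + 1 = 2 * r" using assms(1) by (simp add: d_def)
  have sumeq: "(\<Sum>p\<in>Bpaths n r. q ^ (maj p - des p)) = S d a b q"
    unfolding Bpaths_eq[OF assms(1,2)] S_def d_def a_def b_def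
    by (subst sum.reindex) (auto simp: inj_on_def stat_cons)
  have "b \<le> a + d" using assms by (simp add: a_def b_def d_def)
  from core[OF this, of q] have cr: "S d a b q = G a b q - q ^ (2*r) * H d a b q" unfolding d1 .
  have F: "qfact (2*n) q = qfact (2*n-1) q * qint (2*n) q"
    using qfact_Suc[of "2*n-1" q] assms by simp
  show ?thesis
  proof (cases "r = n")
    case True
    have H0: "H d a b q = 0" unfolding H_def using True d1 assms by (simp add: b_def)
    have a0: "a = 0" using True by (simp add: a_def)
    have s1: "S d a b q = 1" using cr H0 a0 by simp
    have nz: "qfact (2*n) q \<noteq> 0" using assms(4) True by (simp add: mult_2)
    have B1: "Bq n r q = 1" unfolding Bq_def using True nz F by (simp add: mult_2)
    have "gbin (2*n-1) (n+r-1) q = 1" using True by (simp add: mult_2 gbin_self)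
    moreover have "gbin (2*n-1) (n+r) q = 0" using True assms by (intro gbin_gt) simp
    ultimately show ?thesis using sumeq s1 B1 True by simp
  next
    case False
    then have rn: "r < n" using assms by simp
    define M' where "M' = n - r - 1"
    define N' where "N' = n + r - 1"
    have aM: "a = Suc M'" using rn by (simp add: a_def M'_def)
    have nrN: "n + r = Suc N'" using assms by (simp add: N'_def)
    have nrM: "n - r = Suc M'" using rn by (simp add: M'_def mult_2)
    have Hv: "H d a b q = G M' (n+r) q" unfolding H_def using rn assms d1
      by (simp add: b_def a_def d_def M'_def add.commute)
    let ?F = "qfact (2*n-1) q"
    let ?A = "qfact M' q" let ?B = "qfact N' q" let ?x = "qint (Suc M') q" let ?y = "qint (Suc N') q"
    let ?z = "qint (2*r) q"
    have nzA: "?A \<noteq> 0" using qfact_nz'[OF assms(5), of M'] by (simp add: M'_def)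
    have nzB: "?B \<noteq> 0" using qfact_nz'[OF assms(4), of N'] by (simp add: N'_def)
    have nzx: "?x \<noteq> 0" using qint_nz[OF assms(5), of M'] nrM by simp
    have nzy: "?y \<noteq> 0" using qint_nz[OF assms(4), of N'] nrN by simp
    have k1: "2*r + (n-r) = n + r" "(n-r) + 2*r = n + r" using assms by simp_all
    have y1': "qint (n+r) q = ?z + q ^ (2*r) * qint (n-r) q"
      using qint_add[of "2*r" "n-r" q] unfolding k1 .
    have y2': "qint (n+r) q = qint (n-r) q + q ^ (n-r) * ?z"
      using qint_add[of "n-r" "2*r" q] unfolding k1 .
    have y1: "?y = ?z + q ^ (2*r) * ?x" using y1' unfolding nrN nrM .
    have y2: "?y = ?x + q ^ (n-r) * ?z" using y2' unfolding nrN nrM .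
    have fA: "qfact (n-r) q = ?A * ?x" using nrM by (simp add: qfact_Suc)
    have fB: "qfact (n+r) q = ?B * ?y" using nrN by (simp add: qfact_Suc)
    have g1: "G a b q * (?A * ?x) * ?B = ?F"
      using QF[of a b q] aM assms by (simp add: qfact_Suc b_def N'_def a_def mult_2)
    have g2: "G M' (n+r) q * ?A * (?B * ?y) = ?F"
      using QF[of M' "n+r" q] fB rn by (simp add: M'_def mult_2)
    have e3: "gbin (2*n-1) (n+r-1) q = G N' (n-r) q" unfolding G_def N'_def using assms
      by (simp add: algebra_simps mult_2_right)
    have e4: "gbin (2*n-1) (n+r) q = G (n+r) M' q" unfolding G_def M'_def using rn
      by (simp add: algebra_simps mult_2_right)
    have g3: "G N' (n-r) q * ?B * (?A * ?x) = ?F"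
      using QF[of N' "n-r" q] fA rn by (simp add: N'_def mult_2)
    have g4: "G (n+r) M' q * (?B * ?y) * ?A = ?F"
      using QF[of "n+r" M' q] fB rn by (simp add: M'_def mult_2)
    have Bqv: "Bq n r q = ?F * ?z / ((?B * ?y) * (?A * ?x))"
      unfolding Bq_def fA fB by simp
    from fin_alg[OF nzA nzB nzx nzy assms(3) y1 y2 g1 g2 g3 g4]
    have r1: "?F * ?z / ((?B * ?y) * (?A * ?x)) = G a b q - q ^ (2*r) * G M' (n+r) q"
      and r2: "?F * ?z / ((?B * ?y) * (?A * ?x)) = inverse q ^ (n-r) * (G N' (n-r) q - G (n+r) M' q)"
      by blast+
    show ?thesis unfolding sumeq cr Hv e3 e4 Bqv using r1 r2 by simp
  qed
qed

end
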